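(* Let $G=(V,E)$ be a graph with a string representation $\varphi$ in the plane. Let $\pi_1$ and $\pi_2$ be two internally disjoint curves with endpoints $a$ and $b$, let $F$ be the closed face of $\mathbb{R}^2\setminus(\pi_1\cup\pi_2)$ containing the string of the vertex occupied by the robber, and let $D$ be the connected component of $G_F$ containing the robber's vertex. If $\pi_1$ and $\pi_2$ are shortest curves relative to $D$, each guarded by five cops, then the robber is confined to $D$.
   Context: A string representation assigns to each vertex $v$ a bounded curve $\varphi(v)\subseteq\mathbb{R}^2$ with distinct $u,v$ adjacent iff $\varphi(u)\cap\varphi(v)\ne\emptyset$. A face of $\mathbb{R}^2\setminus X$ is an arc-connected component, a closed face its closure. For $X\subseteq\mathbb{R}^2$, a vertex $v$ is contained in $X$ if $\varphi(v)\subseteq\mathrm{int}(X)$, and $G_X$ is the subgraph induced by vertices contained in $X$. A path $P$ is a shortest path relative to $D\subseteq V$ if it is shortest in $G[P\cup D]$. For such $P$ from $u$ to $v$ and points $A\in\varphi(u)$, $B\in\varphi(v)$, a curve $\pi\subseteq\bigcup_{p\in P}\varphi(p)$ from $A$ to $B$ whose intersection with each $\varphi(p)$ is connected, these intersections occurring along $\pi$ in the order of $P$, is a shortest curve of $P$ relative to $D$; a shortest curve relative to $D$ is one for some shortest path relative to $D$. Guarding a shortest curve $\pi$ means guarding $N[P]$ for the corresponding path $P$, i.e. the cops' strategy ensures the robber is immediately captured upon moving to any vertex of $N[P]$. The robber is confined to $D$ if he is immediately captured upon moving to any vertex outside $D$. (Game: cops and robber alternate, each staying or moving along an edge; capture when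 a cop is on the robber's vertex.) *)

theory Defs
  imports "HOL-Analysis.Analysis"
begin

definition simple_graph :: "'v set \<Rightarrow> ('v \<Rightarrow> 'v \<Rightarrow> bool) \<Rightarrow> bool" where
  "simple_graph V E \<longleftrightarrow> finite V \<and> (\<forall>u v. E u v \<longrightarrow> u \<in> V \<and> v \<in> V \<and> u \<noteq> v \<and> E v u)"

definition string_rep :: "'v set \<Rightarrow> ('v \<Rightarrow> 'v \<Rightarrow> bool) \<Rightarrow> ('v \<Rightarrow> complex set) \<Rightarrow> bool" where
  "string_rep V E \<phi> \<longleftrightarrow>
     (\<forall>v\<in>V. \<exists>g. path g \<and> \<phi> v = path_image g) \<and>
     (\<forall>u\<in>V. \<forall>v\<in>V. u \<noteq> v \<longrightarrow> (E u v \<longleftrightarrow> \<phi> u \<inter> \<phi> v \<noteq> {}))"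

definition gwalk :: "('v \<Rightarrow> 'v \<Rightarrow> bool) \<Rightarrow> 'v set \<Rightarrow> 'v list \<Rightarrow> bool" where
  "gwalk E W xs \<longleftrightarrow> xs \<noteq> [] \<and> set xs \<subseteq> W \<and>
     (\<forall>i. Suc i < length xs \<longrightarrow> E (xs ! i) (xs ! Suc i))"

definition gpath :: "('v \<Rightarrow> 'v \<Rightarrow> bool) \<Rightarrow> 'v set \<Rightarrow> 'v list \<Rightarrow> bool" where
  "gpath E W xs \<longleftrightarrow> gwalk E W xs \<and> distinct xs"

definition shortest_path_rel :: "'v set \<Rightarrow> ('v \<Rightarrow> 'v \<Rightarrow> bool) \<Rightarrow> 'v set \<Rightarrow> 'v list \<Rightarrow> bool" where
  "shortest_path_rel V E D P \<longleftrightarrow> gpath E V P \<and>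
     (\<forall>Q. gwalk E ((set P \<union> D) \<inter> V) Q \<and> hd Q = hd P \<and> last Q = last P \<longrightarrow> length P \<le> length Q)"

text \<open>A shortest curve of P: a curve from a point of \<phi>(first P) to a point of \<phi>(last P),
  inside the union of the strings of P, meeting each string of P in a connected set, and
  traversing the strings in the order of P (subdivision of the parameter interval).\<close>
definition curve_of_path :: "('v \<Rightarrow> complex set) \<Rightarrow> 'v list \<Rightarrow> (real \<Rightarrow> complex) \<Rightarrow> bool" where
  "curve_of_path \<phi> P g \<longleftrightarrow> path g \<and> P \<noteq> [] \<and>
     pathstart g \<in> \<phi> (hd P) \<and> pathfinish g \<in> \<phi> (last P) \<and>
     path_image g \<subseteq> (\<Union>p\<in>set P. \<phi> p) \<and>
     (\<forall>p\<in>set P. connected (path_image g \<inter> \<phi> p)) \<and>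
     (\<exists>s :: nat \<Rightarrow> real. s 0 = 0 \<and> s (length P) = 1 \<and>
        (\<forall>i<length P. s i \<le> s (Suc i) \<and> g ` {s i..s (Suc i)} \<subseteq> \<phi> (P ! i)))"

definition shortest_curve_rel ::
  "'v set \<Rightarrow> ('v \<Rightarrow> 'v \<Rightarrow> bool) \<Rightarrow> ('v \<Rightarrow> complex set) \<Rightarrow> 'v set \<Rightarrow> 'v list \<Rightarrow> (real \<Rightarrow> complex) \<Rightarrow> bool" where
  "shortest_curve_rel V E \<phi> D P g \<longleftrightarrow> shortest_path_rel V E D P \<and> curve_of_path \<phi> P g"

definition closed_nbhd :: "'v set \<Rightarrow> ('v \<Rightarrow> 'v \<Rightarrow> bool) \<Rightarrow> 'v set \<Rightarrow> 'v set" where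
  "closed_nbhd V E S = {w\<in>V. \<exists>p\<in>S. w = p \<or> E p w}"

text \<open>Vertices contained in X (vertex set of G_X).\<close>
definition contained_in :: "'v set \<Rightarrow> ('v \<Rightarrow> complex set) \<Rightarrow> complex set \<Rightarrow> 'v set" where
  "contained_in V \<phi> X = {v\<in>V. \<phi> v \<subseteq> interior X}"

definition gcomponent :: "('v \<Rightarrow> 'v \<Rightarrow> bool) \<Rightarrow> 'v set \<Rightarrow> 'v \<Rightarrow> 'v set" where
  "gcomponent E W r = {v. \<exists>xs. gwalk E W xs \<and> hd xs = r \<and> last xs = v}"

text \<open>Round t: cops are at positions C t (cop k at C t k), then the
  robber moves to R t; then the cops move to C (Suc t).\<close>
definition valid_play :: "'v set \<Rightarrow> ('v \<Rightarrow> 'v \<Rightarrow> bool) \<Rightarrow> (nat \<Rightarrow> 'c \<Rightarrow> 'v) \<Rightarrow> (nat \<Rightarrow> 'v) \<Rightarrow> bool" where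
  "valid_play V E C R \<longleftrightarrow>
     (\<forall>t. R t \<in> V \<and> (\<forall>k. C t k \<in> V)) \<and>
     (\<forall>t. R (Suc t) = R t \<or> E (R t) (R (Suc t))) \<and>
     (\<forall>t k. C (Suc t) k = C t k \<or> E (C t k) (C (Suc t) k))"

definition captured_by :: "'c set \<Rightarrow> (nat \<Rightarrow> 'c \<Rightarrow> 'v) \<Rightarrow> (nat \<Rightarrow> 'v) \<Rightarrow> nat \<Rightarrow> bool" where
  "captured_by K C R t \<longleftrightarrow> (\<exists>k\<in>K. C t k = R t \<or> C (Suc t) k = R t)"

definition alive :: "(nat \<Rightarrow> 'c \<Rightarrow> 'v) \<Rightarrow> (nat \<Rightarrow> 'v) \<Rightarrow> nat \<Rightarrow> bool" where
  "alive C R t \<longleftrightarrow> (\<forall>s<t. \<not> captured_by UNIV C R s)"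

definition guards :: "'c set \<Rightarrow> (nat \<Rightarrow> 'c \<Rightarrow> 'v) \<Rightarrow> (nat \<Rightarrow> 'v) \<Rightarrow> 'v set \<Rightarrow> bool" where
  "guards K C R X \<longleftrightarrow> (\<forall>t. alive C R t \<and> R t \<in> X \<longrightarrow> captured_by K C R t)"

definition confines :: "'c set \<Rightarrow> (nat \<Rightarrow> 'c \<Rightarrow> 'v) \<Rightarrow> (nat \<Rightarrow> 'v) \<Rightarrow> 'v set \<Rightarrow> bool" where
  "confines K C R D \<longleftrightarrow> (\<forall>t. alive C R t \<and> R t \<notin> D \<longrightarrow> captured_by K C R t)"

end

theory Submission
  imports Defs
begin

lemma frontier_F_sub:
  fixes A :: "complex set"
  assumes "closed A" and "F = closure (connected_component_set (- A) x)"
  shows "frontier (interior F) \<subseteq> A"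
proof -
  have "frontier (interior F) \<subseteq> frontier F" by (rule frontier_interior_subset)
  also have "\<dots> \<subseteq> frontier (connected_component_set (- A) x)"
    using assms(2) unfolding frontier_def
    using interior_mono[OF closure_subset] by auto
  also have "\<dots> \<subseteq> frontier (- A)" by (rule frontier_of_connected_component_subset)
  also have "\<dots> \<subseteq> A" using assms(1)
    by (simp add: frontier_complement frontier_subset_closed)
  finally show ?thesis .
qed

theorem lemma8:
  fixes V :: "'v set" and E :: "'v \<Rightarrow> 'v \<Rightarrow> bool" and \<phi> :: "'v \<Rightarrow> complex set"
    and \<pi>1 \<pi>2 :: "real \<Rightarrow> complex" and a b :: complex
    and F :: "complex set" and D :: "'v set" and P1 P2 :: "'v list"
    and C :: "nat \<Rightarrow> 'c \<Rightarrow> 'v" and R :: "nat \<Rightarrow> 'v" and K1 K2 :: "'c set"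
  assumes "simple_graph V E"
    and "string_rep V E \<phi>"
    and "path \<pi>1" and "path \<pi>2"
    and "pathstart \<pi>1 = a" and "pathfinish \<pi>1 = b"
    and "pathstart \<pi>2 = a" and "pathfinish \<pi>2 = b"
    and "path_image \<pi>1 \<inter> path_image \<pi>2 = {a, b}"
    and "valid_play V E C R"
    and "\<exists>x. x \<notin> path_image \<pi>1 \<union> path_image \<pi>2 \<and>
           F = closure (connected_component_set (- (path_image \<pi>1 \<union> path_image \<pi>2)) x)"
    and "\<phi> (R 0) \<subseteq> F"
    and "R 0 \<in> contained_in V \<phi> F"
    and "D = gcomponent E (contained_in V \<phi> F) (R 0)"
    and "shortest_curve_rel V E \<phi> D P1 \<pi>1"
    and "shortest_curve_rel V E \<phi> D P2 \<pi>2"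
    and "card K1 = 5" and "card K2 = 5" and "K1 \<inter> K2 = {}"
    and "guards K1 C R (closed_nbhd V E (set P1))"
    and "guards K2 C R (closed_nbhd V E (set P2))"
  shows "confines (K1 \<union> K2) C R D"
proof -
  define W where "W = contained_in V \<phi> F"
  define A where "A = path_image \<pi>1 \<union> path_image \<pi>2"
  have clA: "closed A" unfolding A_def
    using assms(3,4) by (simp add: closed_Un closed_path_image)
  obtain x where Fx: "F = closure (connected_component_set (- A) x)"
    using assms(11) unfolding A_def by blast
  have frA: "frontier (interior F) \<subseteq> A" by (rule frontier_F_sub[OF clA Fx])
  have DW: "D \<subseteq> W" unfolding assms(14) W_def[symmetric] gcomponent_def gwalk_def
    by auto
  have R0D: "R 0 \<in> D" unfolding assms(14)  gcomponent_def gwalk_def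
    using assms(13) by (intro CollectI exI[of _ "[R 0]"]) auto
  have ext: "v \<in> D" if "u \<in> D" "E u v" "v \<in> W" for u v
  proof -
    from that(1) obtain xs where xs: "gwalk E W xs" "hd xs = R 0" "last xs = u"
      unfolding assms(14) W_def[symmetric] gcomponent_def by blast
    have "gwalk E W (xs @ [v])"
      using xs that(2,3) unfolding gwalk_def
      apply (auto simp: nth_append last_conv_nth less_Suc_eq)
      proof - fix i assume "Suc i = length xs" "E (xs ! (length xs - Suc 0)) v" hence "i = length xs - Suc 0" by simp thus "E (xs ! i) v" using \<open>E (xs ! (length xs - Suc 0)) v\<close> by simp qed
    moreover have "hd (xs @ [v]) = R 0" "last (xs @ [v]) = v" using xs by (auto simp: gwalk_def)
    ultimately show ?thesis unfolding assms(14) W_def[symmetric] gcomponent_def by blast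
  qed
  have srep: "\<forall>v\<in>V. \<exists>g. path g \<and> \<phi> v = path_image g"
    "\<forall>u\<in>V. \<forall>v\<in>V. u \<noteq> v \<longrightarrow> (E u v \<longleftrightarrow> \<phi> u \<inter> \<phi> v \<noteq> {})"
    using assms(2) unfolding string_rep_def by auto
  have vp: "\<forall>t. R t \<in> V" "\<forall>t. R (Suc t) = R t \<or> E (R t) (R (Suc t))"
    using assms(10) unfolding valid_play_def by auto
  have nb: "v \<in> closed_nbhd V E (set P)" if H: "shortest_curve_rel V E \<phi> D P g"
     "z \<in> path_image g" "z \<in> \<phi> v" "v \<in> V" for P g z v
  proof -
    have "path_image g \<subseteq> (\<Union>p\<in>set P. \<phi> p)" "set P \<subseteq> V"
      using H(1) unfolding shortest_curve_rel_def curve_of_path_def shortest_path_rel_def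
        gpath_def gwalk_def by auto
    then obtain p where p: "p \<in> set P" "z \<in> \<phi> p" "p \<in> V" using H(2) by blast
    have "v = p \<or> E p v" using srep(2)[rule_format, OF p(3) H(4)] p(2) H(3) by blast
    then show ?thesis unfolding closed_nbhd_def using p H(4) by blast
  qed
  have step: "captured_by (K1 \<union> K2) C R (Suc s)"
    if "R s \<in> D" "R (Suc s) \<notin> D" "alive C R (Suc s)" for s
  proof -
    have ne: "R s \<noteq> R (Suc s)" using that(1,2) by force
    have E1: "E (R s) (R (Suc s))" using vp(2)[rule_format, of s] ne by simp
    have nW: "R (Suc s) \<notin> W" using ext[OF that(1) E1] that(2) by blast
    have sW: "\<phi> (R s) \<subseteq> interior F" using DW that(1) unfolding W_def contained_in_def by auto
    have "\<phi> (R s) \<inter> \<phi> (R (Suc s)) \<noteq> {}" using srep(2)[rule_format, OF vp(1)[rule_format] vp(1)[rule_format] ne] E1 by simp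
    hence c1: "\<phi> (R (Suc s)) \<inter> interior F \<noteq> {}" using sW by blast
    have c2: "\<phi> (R (Suc s)) - interior F \<noteq> {}" using nW vp(1) unfolding W_def contained_in_def by auto
    obtain g where "path g" "\<phi> (R (Suc s)) = path_image g" using srep(1) vp(1) by blast
    hence "connected (\<phi> (R (Suc s)))" by (simp add: connected_path_image)
    then obtain z where z: "z \<in> \<phi> (R (Suc s))" "z \<in> frontier (interior F)"
      using connected_Int_frontier[OF _ c1 c2] by blast
    hence "z \<in> A" using frA by blast
    then show ?thesis
    proof (unfold A_def, elim UnE)
      assume "z \<in> path_image \<pi>1"
      hence "R (Suc s) \<in> closed_nbhd V E (set P1)" using nb[OF assms(15) _ z(1)] vp(1) by blast
      thus ?thesis using assms(20) that(3) unfolding guards_def captured_by_def by blast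
    next
      assume "z \<in> path_image \<pi>2"
      hence "R (Suc s) \<in> closed_nbhd V E (set P2)" using nb[OF assms(16) _ z(1)] vp(1) by blast
      thus ?thesis using assms(21) that(3) unfolding guards_def captured_by_def by blast
    qed
  qed
  have main: "alive C R t \<Longrightarrow> R t \<notin> D \<Longrightarrow> captured_by (K1 \<union> K2) C R t" for t
  proof (induction t)
    case 0 then show ?case using R0D by simp
  next
    case (Suc s)
    show ?case
    proof (cases "R s \<in> D")
      case True then show ?thesis using step Suc.prems by blast
    next
      case False
      have "alive C R s" using Suc.prems(1) unfolding alive_def by auto
      hence "captured_by (K1 \<union> K2) C R s" using Suc.IH False by blast
      hence "captured_by UNIV C R s" unfolding captured_by_def by blast
      with Suc.prems(1) show ?thesis unfolding alive_def by blast
    qed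
  qed
  show ?thesis unfolding confines_def using main by blast
qed

end
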